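(* Let $f(x)=\max_{a\in A}(c_a+a\cdot x)$ be a homogeneous tropical signomial on $\mathbb{R}^n$, and let $H=\{x\in\mathbb{R}^n:\sum_j x_j=0\}$. Then $f$ attains a minimum over $H$ if and only if some cell $\sigma$ of the regular subdivision $\Delta(f)$ contains a point of the form $\lambda\mathbf{1}_n$, $\lambda\in\mathbb{R}$, in its relative interior (the central cell); in that case the set of minimizers of $f$ over $H$ is exactly the cell of $\overline{\mathrm{NC}}(f)$ dual to $\sigma$.
   Context: A tropical signomial is $f(x)=\max_{a\in A}(c_a+a\cdot x)$ with $A\subset\mathbb{R}^n_{\ge 0}$ finite and $c_a\in\mathbb{R}\cup\{-\infty\}$; its support is $\mathrm{supp}(f)=\{a\in A: c_a\neq-\infty\}$, assumed nonempty, with distinct exponents. $f$ is homogeneous if $\sum_j a_j$ is the same for all $a\in \mathrm{supp}(f)$. For $x\in\mathbb{R}^n$ let $B(x)=\{a\in\mathrm{supp}(f): c_a+a\cdot x=f(x)\}$. The regular subdivision $\Delta(f)$ (induced by lifting $a$ to $(a,c_a)$ and taking upper faces) has as cells the polytopes $\mathrm{conv}(B(x))$, $x\in\mathbb{R}^n$; a cell $\sigma=\mathrm{conv}(B(x))$ determines the set $B(x)$. The normal complex $\mathrm{NC}(f)$ consists of the polyhedra $D(\sigma)=\{y\in\mathbb{R}^n: B(x)\subseteq B(y)\}$ for cells $\sigma=\mathrm{conv}(B(x))$ (the regions where $f$ is linear and their faces); $D(\sigma)$ is the cell dual to $\sigma$. $\overline{\mathrm{NC}}(f)$ is the complex $\{D(\sigma)\cap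 H\}$, and the cell of $\overline{\mathrm{NC}}(f)$ dual to $\sigma$ is $D(\sigma)\cap H$. *)

theory Defs
  imports "HOL-Analysis.Analysis"
begin

text \<open>A tropical signomial is given by a finite exponent set A \<subseteq> R^n_{\<ge>0} and
coefficients c_a in R \<union> {-\<infinity>} (modelled as ereal; only -\<infinity> and finite values matter).\<close>

definition tsupp :: "(real^'n) set \<Rightarrow> (real^'n \<Rightarrow> ereal) \<Rightarrow> (real^'n) set" where
  "tsupp A c = {a \<in> A. c a \<noteq> -\<infinity>}"

definition is_tsignomial :: "(real^'n) set \<Rightarrow> (real^'n \<Rightarrow> ereal) \<Rightarrow> bool" where
  "is_tsignomial A c \<longleftrightarrow> finite A \<and> (\<forall>a\<in>A. \<forall>i. 0 \<le> a $ i)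
     \<and> tsupp A c \<noteq> {} \<and> (\<forall>a\<in>A. c a \<noteq> \<infinity>)"

definition teval :: "(real^'n) set \<Rightarrow> (real^'n \<Rightarrow> ereal) \<Rightarrow> real^'n \<Rightarrow> real" where
  "teval A c x = Max ((\<lambda>a. real_of_ereal (c a) + a \<bullet> x) ` tsupp A c)"

definition thomogeneous :: "(real^'n) set \<Rightarrow> (real^'n \<Rightarrow> ereal) \<Rightarrow> bool" where
  "thomogeneous A c \<longleftrightarrow> (\<exists>d. \<forall>a\<in>tsupp A c. (\<Sum>j\<in>UNIV. a $ j) = d)"

definition tB :: "(real^'n) set \<Rightarrow> (real^'n \<Rightarrow> ereal) \<Rightarrow> real^'n \<Rightarrow> (real^'n) set" where
  "tB A c x = {a \<in> tsupp A c. real_of_ereal (c a) + a \<bullet> x = teval A c x}"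

text \<open>Cells of the regular subdivision \<Delta>(f): conv(B(x)).\<close>
definition tcells :: "(real^'n) set \<Rightarrow> (real^'n \<Rightarrow> ereal) \<Rightarrow> (real^'n) set set" where
  "tcells A c = {convex hull (tB A c x) | x. True}"

text \<open>Dual cell D(\<sigma>) of \<sigma> = conv(B(x)) in NC(f).\<close>
definition tdual :: "(real^'n) set \<Rightarrow> (real^'n \<Rightarrow> ereal) \<Rightarrow> real^'n \<Rightarrow> (real^'n) set" where
  "tdual A c x = {y. tB A c x \<subseteq> tB A c y}"

definition hypH :: "(real^'n) set" where
  "hypH = {x. (\<Sum>j\<in>UNIV. x $ j) = 0}"

end

theory Submission
  imports Defs
begin


lemma ts_fin: "is_tsignomial A c \<Longrightarrow> finite (tsupp A c)"
  unfolding is_tsignomial_def tsupp_def by auto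

lemma ts_ne: "is_tsignomial A c \<Longrightarrow> tsupp A c \<noteq> {}"
  unfolding is_tsignomial_def by auto

lemma teval_ge: "is_tsignomial A c \<Longrightarrow> b \<in> tsupp A c \<Longrightarrow> real_of_ereal (c b) + b \<bullet> x \<le> teval A c x"
  unfolding teval_def by (intro Max_ge) (auto simp: ts_fin)

lemma teval_att: "is_tsignomial A c \<Longrightarrow> \<exists>b\<in>tsupp A c. real_of_ereal (c b) + b \<bullet> x = teval A c x"
proof -
  assume h: "is_tsignomial A c"
  have "teval A c x \<in> (\<lambda>a. real_of_ereal (c a) + a \<bullet> x) ` tsupp A c"
    unfolding teval_def using ts_fin[OF h] ts_ne[OF h] by (intro Max_in) auto
  then show ?thesis by force
qed

lemma teval_eqI: "is_tsignomial A c \<Longrightarrow> (\<And>b. b \<in> tsupp A c \<Longrightarrow> real_of_ereal (c b) + b \<bullet> x \<le> v)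
  \<Longrightarrow> b0 \<in> tsupp A c \<Longrightarrow> real_of_ereal (c b0) + b0 \<bullet> x = v \<Longrightarrow> teval A c x = v"
  by (metis antisym teval_att teval_ge)

lemma tB_ne: "is_tsignomial A c \<Longrightarrow> tB A c x \<noteq> {}"
  using teval_att unfolding tB_def by fastforce

lemma tB_sub: "tB A c x \<subseteq> tsupp A c" unfolding tB_def by auto

lemma tB_fin: "is_tsignomial A c \<Longrightarrow> finite (tB A c x)"
  using ts_fin tB_sub finite_subset by metis

lemma one_inner: "x \<bullet> (\<chi> i. (1::real)) = (\<Sum>j\<in>UNIV. x $ j)"
  by (simp add: inner_vec_def)

lemma one_one: "(\<chi> i. (1::real)) \<bullet> ((\<chi> i. 1) :: real^'n) = real CARD('n)"
  by (simp add: inner_vec_def)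

lemma hypH_iff: "x \<in> hypH \<longleftrightarrow> x \<bullet> (\<chi> i. 1) = 0"
  by (simp add: hypH_def one_inner)

lemma hom_d:
  assumes "is_tsignomial A c" "thomogeneous A c"
  obtains d where "\<And>b. b \<in> tsupp A c \<Longrightarrow> b \<bullet> (\<chi> i. 1) = d"
  using assms(2) unfolding thomogeneous_def one_inner by blast

lemma shift:
  assumes h: "is_tsignomial A c" and d: "\<And>b. b \<in> tsupp A c \<Longrightarrow> b \<bullet> (\<chi> i. 1) = d"
  shows "teval A c (x + s *\<^sub>R (\<chi> i. 1)) = teval A c x + s * d"
    "tB A c (x + s *\<^sub>R (\<chi> i. 1)) = tB A c x"
proof -
  have e: "b \<bullet> (x + s *\<^sub>R (\<chi> i. 1)) = b \<bullet> x + s * d" if "b \<in> tsupp A c" for b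
    using d[OF that] by (simp add: inner_add_right)
  obtain b0 where b0: "b0 \<in> tsupp A c" "real_of_ereal (c b0) + b0 \<bullet> x = teval A c x"
    using teval_att[OF h] by blast
  show 1: "teval A c (x + s *\<^sub>R (\<chi> i. 1)) = teval A c x + s * d"
    apply (rule teval_eqI[OF h _ b0(1)])
    using e teval_ge[OF h] b0 by force+
  show "tB A c (x + s *\<^sub>R (\<chi> i. 1)) = tB A c x"
    unfolding tB_def 1 using e by force
qed

lemma subgrad:
  assumes h: "is_tsignomial A c" and p: "p \<in> convex hull (tB A c x)"
  shows "teval A c y \<ge> teval A c x + p \<bullet> (y - x)"
proof -
  have "tB A c x \<subseteq> {p. p \<bullet> (y - x) \<le> teval A c y - teval A c x}"
  proof
    fix b assume b: "b \<in> tB A c x"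
    then have "real_of_ereal (c b) + b \<bullet> x = teval A c x" "b \<in> tsupp A c" unfolding tB_def by auto
    moreover have "real_of_ereal (c b) + b \<bullet> y \<le> teval A c y" using teval_ge[OF h] calculation(2) .
    ultimately show "b \<in> {p. p \<bullet> (y - x) \<le> teval A c y - teval A c x}"
      by (simp add: inner_diff_right)
  qed
  then have "convex hull (tB A c x) \<subseteq> {p. p \<bullet> (y - x) \<le> teval A c y - teval A c x}"
    by (intro hull_minimal) (auto simp: inner_commute[of _ "y - x"] intro: convex_halfspace_le)
  then show ?thesis using p by auto
qed

lemma hull_half_le:
  assumes "\<And>b. b \<in> S \<Longrightarrow> u \<bullet> b \<le> m" "p \<in> convex hull S"
  shows "u \<bullet> p \<le> (m::real)"
proof -
  have "convex hull S \<subseteq> {p. u \<bullet> p \<le> m}"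
    using assms(1) by (intro hull_minimal) (auto intro: convex_halfspace_le)
  then show ?thesis using assms(2) by auto
qed

lemma hull_half_ge:
  assumes "\<And>b. b \<in> S \<Longrightarrow> u \<bullet> b \<ge> m" "p \<in> convex hull S"
  shows "u \<bullet> p \<ge> (m::real)"
  using hull_half_le[of S "-u" "-m" p] assms by force

lemma perturb:
  fixes x u :: "real^'n"
  assumes h: "is_tsignomial A c"
  defines "m \<equiv> Max ((\<lambda>b. u \<bullet> b) ` tB A c x)"
  obtains e where "e > 0" "teval A c (x + e *\<^sub>R u) = teval A c x + e * m"
    "tB A c (x + e *\<^sub>R u) = {b \<in> tB A c x. u \<bullet> b = m}"
proof -
  let ?r = "\<lambda>b. real_of_ereal (c b)"
  have ev: "\<forall>\<^sub>F e in at_right 0. \<forall>b\<in>tsupp A c - tB A c x. ?r b + b \<bullet> (x + e *\<^sub>R u) < teval A c x + e * m"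
  proof (rule eventually_ball_finite)
    show "finite (tsupp A c - tB A c x)" using ts_fin[OF h] by auto
    show "\<forall>b\<in>tsupp A c - tB A c x. \<forall>\<^sub>F e in at_right 0. ?r b + b \<bullet> (x + e *\<^sub>R u) < teval A c x + e * m"
    proof
      fix b assume b: "b \<in> tsupp A c - tB A c x"
      then have lt: "?r b + b \<bullet> x - teval A c x < 0"
        using teval_ge[OF h, of b x] unfolding tB_def by auto
      have "((\<lambda>e. (?r b + b \<bullet> x - teval A c x) + e * (b \<bullet> u - m)) \<longlongrightarrow> (?r b + b \<bullet> x - teval A c x) + 0 * (b \<bullet> u - m)) (at_right 0)"
        by (intro tendsto_intros)
      then have "\<forall>\<^sub>F e in at_right 0. (?r b + b \<bullet> x - teval A c x) + e * (b \<bullet> u - m) < 0"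
        using lt by (intro order_tendstoD(2)) auto
      then show "\<forall>\<^sub>F e in at_right 0. ?r b + b \<bullet> (x + e *\<^sub>R u) < teval A c x + e * m"
        by eventually_elim (simp add: inner_add_right algebra_simps)
    qed
  qed
  moreover have "\<forall>\<^sub>F e in at_right (0::real). e > 0" by (simp add: eventually_at_right_less)
  ultimately have "\<forall>\<^sub>F e in at_right (0::real). e > 0 \<and> (\<forall>b\<in>tsupp A c - tB A c x. ?r b + b \<bullet> (x + e *\<^sub>R u) < teval A c x + e * m)"
    by eventually_elim auto
  then obtain e where e: "e > 0" "\<And>b. b\<in>tsupp A c - tB A c x \<Longrightarrow> ?r b + b \<bullet> (x + e *\<^sub>R u) < teval A c x + e * m"
    using eventually_happens'[OF trivial_limit_at_right_real] by blast
  have mB: "m \<in> (\<lambda>b. u \<bullet> b) ` tB A c x" unfolding m_def using tB_fin[OF h] tB_ne[OF h] by (intro Max_in) auto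
  then obtain b0 where b0: "b0 \<in> tB A c x" "u \<bullet> b0 = m" by auto
  have leM: "u \<bullet> b \<le> m" if "b \<in> tB A c x" for b unfolding m_def using tB_fin[OF h] that by (intro Max_ge) auto
  have inB: "?r b + b \<bullet> (x + e *\<^sub>R u) = teval A c x + e * (u \<bullet> b)" if "b \<in> tB A c x" for b
    using that unfolding tB_def by (auto simp: inner_add_right inner_commute)
  have T: "teval A c (x + e *\<^sub>R u) = teval A c x + e * m"
  proof (rule teval_eqI[OF h])
    show "b0 \<in> tsupp A c" using b0 tB_sub by blast
    show "?r b0 + b0 \<bullet> (x + e *\<^sub>R u) = teval A c x + e * m" using inB[OF b0(1)] b0(2) by simp
    fix b assume b: "b \<in> tsupp A c"
    show "?r b + b \<bullet> (x + e *\<^sub>R u) \<le> teval A c x + e * m"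
    proof (cases "b \<in> tB A c x")
      case True then show ?thesis using inB leM[OF True] e(1) by (simp add: mult_left_mono)
    next
      case False then show ?thesis using e(2)[of b] b by force
    qed
  qed
  have "tB A c (x + e *\<^sub>R u) = {b \<in> tB A c x. u \<bullet> b = m}"
  proof (intro set_eqI iffI)
    fix b assume b: "b \<in> tB A c (x + e *\<^sub>R u)"
    then have bs: "b \<in> tsupp A c" and eq: "?r b + b \<bullet> (x + e *\<^sub>R u) = teval A c x + e * m"
      unfolding tB_def T by auto
    have "b \<in> tB A c x" using e(2)[of b] bs eq by force
    then show "b \<in> {b \<in> tB A c x. u \<bullet> b = m}" using inB eq e(1) by auto
  next
    fix b assume "b \<in> {b \<in> tB A c x. u \<bullet> b = m}"
    then show "b \<in> tB A c (x + e *\<^sub>R u)" using inB tB_sub unfolding tB_def T by auto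
  qed
  then show ?thesis using that e(1) T by blast
qed



lemma min_of:
  assumes h: "is_tsignomial A c" and x: "x \<in> hypH" and y: "y \<in> hypH"
    and t: "t *\<^sub>R (\<chi> i. (1::real)) \<in> convex hull (tB A c x)"
  shows "teval A c x \<le> teval A c y"
proof -
  have "teval A c y \<ge> teval A c x + (t *\<^sub>R (\<chi> i. (1::real))) \<bullet> (y - x)"
    by (rule subgrad[OF h t])
  moreover have "(t *\<^sub>R (\<chi> i. (1::real))) \<bullet> (y - x) = 0"
    using x y unfolding hypH_iff by (simp add: inner_diff_right inner_commute)
  ultimately show ?thesis by (metis add.right_neutral)
qed

lemma proj:
  fixes x0 :: "real^'n"
  assumes h: "is_tsignomial A c" and hom: "thomogeneous A c"
  obtains x' where "x' \<in> hypH" "tB A c x' = tB A c x0" 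
    "\<And>s. x0 = x' + s *\<^sub>R (\<chi> i. (1::real)) \<Longrightarrow> True"
proof -
  obtain d where d: "\<And>b. b \<in> tsupp A c \<Longrightarrow> b \<bullet> (\<chi> i. 1) = d" using hom_d[OF h hom] by blast
  define k where "k = (x0 \<bullet> (\<chi> i. (1::real))) / real CARD('n)"
  define x' where "x' = x0 + (-k) *\<^sub>R (\<chi> i. (1::real))"
  have n0: "real CARD('n) > 0" by simp
  have "x' \<in> hypH" unfolding hypH_iff x'_def k_def
    using n0 by (simp add: inner_add_left inner_diff_left one_one)
  moreover have "tB A c x' = tB A c x0" unfolding x'_def by (rule shift(2)[OF h d])
  ultimately show ?thesis using that by blast
qed

lemma part2:
  fixes x0 :: "real^'n"
  assumes h: "is_tsignomial A c" and hom: "thomogeneous A c"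
    and ri: "t *\<^sub>R (\<chi> i. (1::real)) \<in> rel_interior (convex hull (tB A c x0))"
  shows "{x \<in> hypH. \<forall>y\<in>hypH. teval A c x \<le> teval A c y} = tdual A c x0 \<inter> hypH"
proof -
  let ?o = "(\<chi> i. (1::real)) :: real^'n"
  let ?K = "convex hull (tB A c x0)"
  have tK: "t *\<^sub>R ?o \<in> ?K" using ri rel_interior_subset by blast
  obtain x' where x': "x' \<in> hypH" "tB A c x' = tB A c x0" using proj[OF h hom] by blast
  show ?thesis
  proof (intro set_eqI iffI)
    fix x assume "x \<in> tdual A c x0 \<inter> hypH"
    then have x: "x \<in> hypH" "tB A c x0 \<subseteq> tB A c x" unfolding tdual_def by auto
    have "t *\<^sub>R ?o \<in> convex hull (tB A c x)" using tK hull_mono[OF x(2)] by blast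
    then show "x \<in> {x \<in> hypH. \<forall>y\<in>hypH. teval A c x \<le> teval A c y}"
      using min_of[OF h x(1)] x(1) by auto
  next
    fix x assume "x \<in> {x \<in> hypH. \<forall>y\<in>hypH. teval A c x \<le> teval A c y}"
    then have x: "x \<in> hypH" "\<And>y. y \<in> hypH \<Longrightarrow> teval A c x \<le> teval A c y" by auto
    have x'min: "teval A c x' \<le> teval A c x"
      using min_of[OF h x'(1) x(1)] tK x'(2) by simp
    have eqv: "teval A c x = teval A c x'" using x(2)[OF x'(1)] x'min by simp
    define w where "w = x - x'"
    have bw: "b \<bullet> w \<le> 0" if "b \<in> tB A c x0" for b
    proof -
      have "b \<in> tsupp A c" "real_of_ereal (c b) + b \<bullet> x' = teval A c x'"
        using that x'(2) unfolding tB_def by auto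
      moreover have "real_of_ereal (c b) + b \<bullet> x \<le> teval A c x" using teval_ge[OF h calculation(1)] .
      ultimately show ?thesis using eqv unfolding w_def by (simp add: inner_diff_right)
    qed
    have pw: "w \<bullet> p \<le> 0" if "p \<in> ?K" for p
      by (rule hull_half_le[OF _ that]) (simp add: bw inner_commute)
    have tw: "w \<bullet> (t *\<^sub>R ?o) = 0"
      using x(1) x'(1) unfolding hypH_iff w_def by (simp add: inner_diff_left)
    have "tB A c x0 \<subseteq> tB A c x"
    proof
      fix b assume b: "b \<in> tB A c x0"
      have "b \<in> affine hull ?K" using b hull_subset[of "tB A c x0" convex] hull_subset[of ?K affine] by blast
      then obtain m where m: "m > 1" "(1 - m) *\<^sub>R b + m *\<^sub>R (t *\<^sub>R ?o) \<in> ?K"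
        using convex_rel_interior_if[OF convex_convex_hull ri] by blast
      have "w \<bullet> ((1 - m) *\<^sub>R b + m *\<^sub>R (t *\<^sub>R ?o)) \<le> 0" using pw[OF m(2)] .
      then have "(1 - m) * (b \<bullet> w) \<le> 0" using tw by (auto simp: inner_add_right inner_commute)
      then have "b \<bullet> w \<ge> 0" using m(1) by (simp add: mult_le_0_iff)
      then have bw0: "b \<bullet> w = 0" using bw[OF b] by simp
      have "b \<in> tsupp A c" "real_of_ereal (c b) + b \<bullet> x' = teval A c x'"
        using b x'(2) unfolding tB_def by auto
      then show "b \<in> tB A c x" using bw0 eqv unfolding tB_def w_def by (simp add: inner_diff_right)
    qed
    then show "x \<in> tdual A c x0 \<inter> hypH" using x(1) unfolding tdual_def by auto
  qed
qed



lemma part1: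
  fixes A :: "(real^'n) set"
  assumes h: "is_tsignomial A c" and hom: "thomogeneous A c"
    and ex: "\<exists>x\<in>hypH. \<forall>y\<in>hypH. teval A c x \<le> teval A c y"
  shows "\<exists>x0 t. t *\<^sub>R (\<chi> i. (1::real)) \<in> rel_interior (convex hull (tB A c x0))"
proof -
  let ?o = "(\<chi> i. (1::real)) :: real^'n"
  define P where "P x \<longleftrightarrow> x \<in> hypH \<and> (\<forall>y\<in>hypH. teval A c x \<le> teval A c y)" for x
  obtain x where Px: "P x" and xmin: "\<And>y. P y \<Longrightarrow> card (tB A c x) \<le> card (tB A c y)"
    using ex_has_least_nat[of P _ "\<lambda>x. card (tB A c x)"] ex unfolding P_def by blast
  let ?K = "convex hull (tB A c x)"
  obtain b0 where b0: "b0 \<in> tB A c x" using tB_ne[OF h] by blast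
  have n0: "real CARD('n) > 0" by simp
  have Kne: "?K \<noteq> {}" using b0 hull_subset[of "tB A c x" convex] by blast
  have Kcl: "closed ?K" using tB_fin[OF h] by (simp add: compact_imp_closed finite_imp_compact_convex_hull)
  have Kco: "compact ?K" using tB_fin[OF h] by (simp add: finite_imp_compact_convex_hull)
  have leM: "u \<bullet> b \<le> Max ((\<lambda>b. u \<bullet> b) ` tB A c x)" if "b \<in> tB A c x" for b u
    using tB_fin[OF h] that by (intro Max_ge) auto
  have inM: "Max ((\<lambda>b. u \<bullet> b) ` tB A c x) \<in> (\<lambda>b. u \<bullet> b) ` tB A c x" for u
    using tB_fin[OF h] tB_ne[OF h] by (intro Max_in) auto
  obtain t where t: "t *\<^sub>R ?o \<in> ?K"
  proof (rule ccontr)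
    assume nt: "\<not> thesis"
    then have nt: "\<And>t. t *\<^sub>R ?o \<notin> ?K" using that by blast
    define T where "T = (\<Union>p\<in>range (\<lambda>s. s *\<^sub>R ?o). \<Union>q\<in>?K. {p + q})"
    have "closed (range (\<lambda>s. s *\<^sub>R ?o))"
      using closed_span[of "{?o}"] by (simp add: span_singleton)
    then have Tcl: "closed T" unfolding T_def using closed_compact_sums Kco by metis
    have "convex (range (\<lambda>s. s *\<^sub>R ?o))"
      using subspace_imp_convex[OF subspace_span[of "{?o}"]] by (simp add: span_singleton)
    then have Tcv: "convex T" unfolding T_def
      by (intro convex_sums convex_convex_hull)
    have "0 \<notin> T"
    proof
      assume "0 \<in> T"
      then obtain s q where "q \<in> ?K" "s *\<^sub>R ?o + q = 0" unfolding T_def by (auto simp del: vector_scaleR_component)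
      then have "(-s) *\<^sub>R ?o \<in> ?K" by (metis add.commute add_eq_0_iff scaleR_minus_left)
      then show False using nt by blast
    qed
    then obtain a \<beta> where ab: "a \<bullet> 0 < \<beta>" "\<And>z. z \<in> T \<Longrightarrow> a \<bullet> z > \<beta>"
      using separating_hyperplane_closed_point[OF Tcv Tcl] by blast
    have inT: "s *\<^sub>R ?o + q \<in> T" if "q \<in> ?K" for s q using that unfolding T_def by blast
    have bK: "b \<in> ?K" if "b \<in> tB A c x" for b using that hull_subset[of "tB A c x" convex] by blast
    have ao: "a \<bullet> ?o = 0"
    proof (rule ccontr)
      assume ne: "a \<bullet> ?o \<noteq> 0"
      have "a \<bullet> ((- (a \<bullet> b0) / (a \<bullet> ?o)) *\<^sub>R ?o + b0) > \<beta>" using ab(2)[OF inT[OF bK[OF b0]]] .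
      then show False using ne ab(1) by (simp add: inner_add_right inner_diff_right)
    qed
    have ab0: "a \<bullet> b > 0" if "b \<in> tB A c x" for b
      using ab(2)[OF inT[OF bK[OF that], of 0]] ab(1) by simp
    obtain e where e: "e > 0" "teval A c (x + e *\<^sub>R (-a)) = teval A c x + e * Max ((\<lambda>b. (-a) \<bullet> b) ` tB A c x)"
      using perturb[OF h, of x "-a"] by blast
    have mneg: "Max ((\<lambda>b. (-a) \<bullet> b) ` tB A c x) < 0" using inM[of "-a"] ab0 by auto
    have "x + e *\<^sub>R (-a) \<in> hypH" using Px ao unfolding P_def hypH_iff by (simp add: inner_add_left inner_diff_left)
    then have "teval A c x \<le> teval A c (x + e *\<^sub>R (-a))" using Px unfolding P_def by blast
    then show False using e(2) mult_pos_neg[OF e(1) mneg] by linarith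
  qed
  show ?thesis
  proof (rule ccontr)
    assume nri: "\<not> ?thesis"
    then have nri: "t *\<^sub>R ?o \<notin> rel_interior ?K" by blast
    have tc: "t *\<^sub>R ?o \<in> closure ?K" using t closure_subset by blast
    obtain a where "a \<noteq> 0" and a: "\<And>y. y \<in> closure ?K \<Longrightarrow> a \<bullet> (t *\<^sub>R ?o) \<le> a \<bullet> y"
      "\<And>y. y \<in> rel_interior ?K \<Longrightarrow> a \<bullet> (t *\<^sub>R ?o) < a \<bullet> y"
      using supporting_hyperplane_relative_frontier[OF convex_convex_hull tc nri] by metis
    have "rel_interior ?K \<noteq> {}" using rel_interior_eq_empty[of ?K] Kne by simp
    then obtain y0 where y0: "y0 \<in> rel_interior ?K" by blast
    define u where "u = -a"
    define m where "m = Max ((\<lambda>b. u \<bullet> b) ` tB A c x)"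
    have bK: "b \<in> ?K" if "b \<in> tB A c x" for b using that hull_subset[of "tB A c x" convex] by blast
    have m1: "m \<le> u \<bullet> (t *\<^sub>R ?o)"
      using inM[of u] a(1)[OF subsetD[OF closure_subset bK]] unfolding m_def u_def by fastforce
    have m2: "u \<bullet> (t *\<^sub>R ?o) \<le> m"
      by (rule hull_half_le[OF _ t]) (use leM in \<open>auto simp: m_def\<close>)
    have m: "m = u \<bullet> (t *\<^sub>R ?o)" using m1 m2 by simp
    obtain e where e: "e > 0" "teval A c (x + e *\<^sub>R u) = teval A c x + e * m"
      "tB A c (x + e *\<^sub>R u) = {b \<in> tB A c x. u \<bullet> b = m}"
      using perturb[OF h, of x u] unfolding m_def by blast
    have "\<exists>b1\<in>tB A c x. u \<bullet> b1 \<noteq> m"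
    proof (rule ccontr)
      assume "\<not> ?thesis"
      then have "m \<le> u \<bullet> y0" using rel_interior_subset y0
        by (intro hull_half_ge[where S="tB A c x" and u=u and m=m and p=y0]) auto
      then show False using a(2)[OF y0] m unfolding u_def by simp
    qed
    then have ps: "tB A c (x + e *\<^sub>R u) \<subset> tB A c x" using e(3) by auto
    have cardlt: "card (tB A c (x + e *\<^sub>R u)) < card (tB A c x)"
      using psubset_card_mono[OF tB_fin[OF h] ps] .
    obtain d where d: "\<And>b. b \<in> tsupp A c \<Longrightarrow> b \<bullet> ?o = d" using hom_d[OF h hom] by blast
    have dB: "\<And>b. b \<in> tB A c x \<Longrightarrow> b \<bullet> ?o = d" using d tB_sub by blast
    have "?o \<bullet> (t *\<^sub>R ?o) \<le> d"
      by (rule hull_half_le[OF _ t]) (use dB in \<open>auto simp: inner_commute\<close>)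
    moreover have "?o \<bullet> (t *\<^sub>R ?o) \<ge> d"
      by (rule hull_half_ge[OF _ t]) (use dB in \<open>auto simp: inner_commute\<close>)
    ultimately have td: "t * real CARD('n) = d" by (simp add: one_one)
    define k where "k = e * (u \<bullet> ?o) / real CARD('n)"
    define z where "z = (x + e *\<^sub>R u) + (-k) *\<^sub>R ?o"
    have tBz: "tB A c z = tB A c (x + e *\<^sub>R u)" unfolding z_def by (rule shift(2)[OF h d])
    have tz1: "teval A c z = teval A c x + e * m + (-k) * d" unfolding z_def using shift(1)[OF h d, of "x + e *\<^sub>R u" "-k"] e(2) by linarith
    have tz2: "e * m + (-k) * d = 0"
      unfolding m k_def td[symmetric] using n0 by (simp add: inner_commute)
    have tz: "teval A c z = teval A c x" using tz1 tz2 by linarith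
    have "z \<in> hypH" using Px n0 unfolding P_def hypH_iff z_def k_def
      by (simp add: inner_add_left inner_diff_left one_one)
    then have "P z" using Px tz unfolding P_def by simp
    then show False using xmin[of z] cardlt tBz by simp
  qed
qed


theorem lemma2p7:
  fixes A :: "(real^'n) set" and c :: "real^'n \<Rightarrow> ereal"
  assumes "is_tsignomial A c" and "thomogeneous A c"
  shows "((\<exists>x\<in>hypH. \<forall>y\<in>hypH. teval A c x \<le> teval A c y) \<longleftrightarrow>
            (\<exists>x0 t. (t *\<^sub>R (\<chi> i. 1)) \<in> rel_interior (convex hull (tB A c x0))))
       \<and> (\<forall>x0 t. (t *\<^sub>R (\<chi> i. 1)) \<in> rel_interior (convex hull (tB A c x0)) \<longrightarrow>
            {x \<in> hypH. \<forall>y\<in>hypH. teval A c x \<le> teval A c y} = tdual A c x0 \<inter> hypH)"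
proof (intro conjI iffI allI impI)
  show "\<exists>x0 t. t *\<^sub>R (\<chi> i. 1) \<in> rel_interior (convex hull (tB A c x0))"
    if "\<exists>x\<in>hypH. \<forall>y\<in>hypH. teval A c x \<le> teval A c y"
    using part1[OF assms that] by simp
next
  assume "\<exists>x0 t. t *\<^sub>R (\<chi> i. 1) \<in> rel_interior (convex hull (tB A c x0))"
  then obtain x0 t where ri: "t *\<^sub>R (\<chi> i. (1::real)) \<in> rel_interior (convex hull (tB A c x0))" by blast
  obtain x' where x': "x' \<in> hypH" "tB A c x' = tB A c x0" using proj[OF assms] by blast
  have "t *\<^sub>R (\<chi> i. (1::real)) \<in> convex hull (tB A c x')" using subsetD[OF rel_interior_subset ri] x'(2) by simp
  then have "\<forall>y\<in>hypH. teval A c x' \<le> teval A c y" using min_of[OF assms(1) x'(1)] by blast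
  then show "\<exists>x\<in>hypH. \<forall>y\<in>hypH. teval A c x \<le> teval A c y" using x'(1) by blast
next
  fix x0 t
  assume "t *\<^sub>R (\<chi> i. 1) \<in> rel_interior (convex hull (tB A c x0))"
  then show "{x \<in> hypH. \<forall>y\<in>hypH. teval A c x \<le> teval A c y} = tdual A c x0 \<inter> hypH"
    using part2[OF assms] by simp
qed

end
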